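(* Let $X$ be a real-valued semimartingale with independent increments, with deterministic differential characteristics $(b^{X[1]}_t,c^X_t,F^X_t)$ relative to an activity process $A$ and the truncation $x\mathbf 1_{\{|x|\le1\}}$. For each $t$, define $\psi:\mathbb{R}\to[-\infty,\infty)$ by $$\psi(y)=b^{X[1]}_ty-\tfrac12c^X_ty^2+\int_{\mathbb{R}}\big(g_{\mathrm{MMV}}(xy)-xy\mathbf 1_{\{|x|\le1\}}\big)F^X_t(dx).$$ Then $$\infty>\lim_{y\to\infty}\frac{\psi(y)}{y}=b^{X[1]}_t-\int_{\mathbb{R}}x\mathbf 1_{\{0<x\le1\}}F^X_t(dx)-\infty\big(\mathbf 1_{\{c^X_t>0\}}+\mathbf 1_{\{F^X_t((-\infty,0))>0\}}\big),$$ with the convention $\infty\times0=0$.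
   Context: Here $g_{\mathrm{MMV}}(x)=x\wedge1-\frac12(x\wedge1)^2$. The characteristics are understood as follows: $X-\sum_{s\le\cdot}\Delta X_s\mathbf 1_{\{|\Delta X_s|>1\}}$ has drift $b^{X[1]}\cdot A$, $\langle X^c,X^c\rangle=c^X\cdot A$, and the jump compensator is $F^X_t(dx)\,dA_t$. $F^X_t$ is a Lévy measure, i.e. $\int(x^2\wedge1)F^X_t(dx)<\infty$ and $F^X_t(\{0\})=0$. *)

theory Defs
  imports "HOL-Analysis.Analysis"
begin

definition g_MMV :: "real \<Rightarrow> real" where
  "g_MMV x = min x 1 - (min x 1)^2 / 2"

definition levy_measure :: "real measure \<Rightarrow> bool" where
  "levy_measure F \<longleftrightarrow> sets F = sets borel \<and> emeasure F {0} = 0 \<and>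
     (\<integral>\<^sup>+ x. ennreal (min (x^2) 1) \<partial>F) < \<infinity>"

definition ereal_integral :: "real measure \<Rightarrow> (real \<Rightarrow> real) \<Rightarrow> ereal" where
  "ereal_integral F f =
     enn2ereal (\<integral>\<^sup>+ x. ennreal (f x) \<partial>F) - enn2ereal (\<integral>\<^sup>+ x. ennreal (- f x) \<partial>F)"

definition psi_MMV :: "real \<Rightarrow> real \<Rightarrow> real measure \<Rightarrow> real \<Rightarrow> ereal" where
  "psi_MMV b c F y = ereal (b * y - c * y^2 / 2) +
     ereal_integral F (\<lambda>x. g_MMV (x * y) - x * y * indicator {x. \<bar>x\<bar> \<le> 1} x)"

end

theory Submission imports Defs begin


definition fM :: "real \<Rightarrow> real \<Rightarrow> real" where
  "fM y x = g_MMV (x*y) - x*y*indicator {x. \<bar>x\<bar> \<le> 1} x"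

definition kP :: "real \<Rightarrow> real \<Rightarrow> real" where
  "kP y x = (if 0 < x \<and> x \<le> 1 then (if x*y \<le> 1 then x^2*y/2 else x - 1/(2*y)) else 0)"

lemma g_le1: "z \<le> 1 \<Longrightarrow> g_MMV z = z - z^2/2" by (simp add: g_MMV_def)
lemma g_gt1: "z > 1 \<Longrightarrow> g_MMV z = 1/2" by (simp add: g_MMV_def)
lemma g_half: "g_MMV z \<le> 1/2"
proof (cases "z \<le> 1")
  case True
  have "0 \<le> (z - 1)^2" by simp
  then show ?thesis using True by (simp add: g_le1 power2_eq_square algebra_simps)
qed (simp add: g_gt1)
lemma g_le_id: "g_MMV z \<le> z"
  by (cases "z \<le> 1") (auto simp: g_le1 g_gt1)
lemma g_nonneg: "z \<ge> 0 \<Longrightarrow> g_MMV z \<ge> 0"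
proof (cases "z \<le> 1")
  case True
  assume "z \<ge> 0"
  then have "z^2 \<le> z" using True mult_right_le_one_le[of z z] by (simp add: power2_eq_square)
  then show ?thesis using True \<open>z \<ge> 0\<close> by (simp add: g_le1)
qed (simp add: g_gt1)

lemma fM_zero: "fM y 0 = 0" by (simp add: fM_def g_le1)

lemma fM_upper: "fM y x \<le> min (x^2) 1"
proof (cases "\<bar>x\<bar> \<le> 1")
  case True
  have "fM y x \<le> 0" using True g_le_id[of "x*y"] by (simp add: fM_def)
  moreover have "0 \<le> min (x^2) 1" by simp
  ultimately show ?thesis by linarith
next
  case False
  have "\<bar>1::real\<bar> \<le> \<bar>x\<bar>" using False by simp
  then have "(1::real)^2 \<le> x^2" by (simp only: abs_le_square_iff)
  then have "min (x^2) 1 = 1" by simp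
  then show ?thesis using False g_half[of "x*y"] by (simp add: fM_def)
qed

lemma fM_neg: assumes "x < 0" "y > 0" shows "- fM y x / y \<ge> y/2 * min (x^2) 1"
proof -
  have xy: "x*y < 0" using assms by (simp add: mult_neg_pos)
  have "- fM y x \<ge> (x*y)^2/2"
    using xy assms by (auto simp: fM_def g_le1 indicator_def)
  then have "- fM y x / y \<ge> (x*y)^2/2/y" using assms by (intro divide_right_mono) auto
  moreover have "(x*y)^2/2/y = y/2 * x^2" using assms by (simp add: power2_eq_square)
  moreover have "y/2 * x^2 \<ge> y/2 * min (x^2) 1" using assms by (simp add: mult_left_mono)
  ultimately show ?thesis by linarith
qed

lemma fM_pos: assumes "x > 0" "y > 0" shows "ennreal (- fM y x / y) = ennreal (kP y x)"
proof (cases "x \<le> 1")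
  case True
  show ?thesis
  proof (cases "x*y \<le> 1")
    case True
    then show ?thesis using \<open>x \<le> 1\<close> assms
      by (simp add: fM_def kP_def g_le1 power2_eq_square)
  next
    case False
    then show ?thesis using \<open>x \<le> 1\<close> assms
      by (simp add: fM_def kP_def g_gt1 field_simps)
  qed
next
  case False
  have "g_MMV (x*y) \<ge> 0" using assms by (intro g_nonneg) simp
  then have "- fM y x / y \<le> 0" using False assms by (simp add: fM_def divide_nonpos_pos)
  then show ?thesis using False by (simp add: kP_def ennreal_neg)
qed

lemma kP_nonneg: "y > 0 \<Longrightarrow> kP y x \<ge> 0"
  by (auto simp: kP_def field_simps)

lemma kP_le: "y > 0 \<Longrightarrow> kP y x \<le> x * indicator {0<..1} x"
proof -
  assume y: "y > 0"
  have "x^2*y/2 \<le> x" if "0 < x" "x*y \<le> 1" for x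
  proof -
    have "x^2*y = x*(x*y)" by (simp add: power2_eq_square)
    also have "\<dots> \<le> x*1" using that by (intro mult_left_mono) auto
    finally show ?thesis using that by simp
  qed
  then show ?thesis using y by (auto simp: kP_def indicator_def)
qed

lemma kP_mono: assumes "0 < y1" "y1 \<le> y2" shows "kP y1 x \<le> kP y2 x"
proof (cases "0 < x \<and> x \<le> 1")
  case True
  then have x: "0 < x" "x \<le> 1" by auto
  have a: "x^2*y1/2 \<le> x^2*y2/2" using assms by (simp add: mult_left_mono)
  have b: "x - 1/(2*y1) \<le> x - 1/(2*y2)" using assms by (simp add: frac_le)
  have c: "x^2*y1/2 \<le> x - 1/(2*y2)" if "x*y1 \<le> 1" "\<not> x*y2 \<le> 1"
  proof -
    have "x^2*y1 = x*(x*y1)" by (simp add: power2_eq_square)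
    also have "\<dots> \<le> x" using that x by (simp add: mult_left_le)
    finally have 1: "x^2*y1/2 \<le> x/2" by simp
    have "1/(2*y2) < x/2" using that assms x by (simp add: field_simps)
    then show ?thesis using 1 by linarith
  qed
  have d: "x*y1 \<le> x*y2" using assms x by (simp add: mult_left_mono)
  show ?thesis using a b c d by (auto simp: kP_def)
qed (auto simp: kP_def)

lemma kP_lim: "(\<lambda>n. kP (real (Suc n)) x) \<longlonglongrightarrow> x * indicator {0<..1} x"
proof (cases "0 < x \<and> x \<le> 1")
  case True
  obtain N where N: "1/x < real N" using reals_Archimedean2 by blast
  have ev: "\<forall>\<^sub>F n in sequentially. x - 1/(2*real (Suc n)) = kP (real (Suc n)) x"
  proof (rule eventually_sequentiallyI[of N])
    fix n assume "N \<le> n"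
    then have "1/x < real (Suc n)" using N by linarith
    then have "1 < x * real (Suc n)" using True by (simp add: field_simps)
    then show "x - 1/(2*real (Suc n)) = kP (real (Suc n)) x" using True by (simp add: kP_def)
  qed
  have "(\<lambda>n. (1/2) * inverse (real (Suc n))) \<longlonglongrightarrow> (1/2) * 0"
    by (intro tendsto_intros LIMSEQ_inverse_real_of_nat)
  then have "(\<lambda>n. 1/(2*real (Suc n))) \<longlonglongrightarrow> 0" by (simp add: field_simps)
  then have "(\<lambda>n. x - 1/(2*real (Suc n))) \<longlonglongrightarrow> x - 0"
    by (intro tendsto_intros)
  then have lim: "(\<lambda>n. x - 1/(2*real (Suc n))) \<longlonglongrightarrow> x" by simp
  have "(\<lambda>n. kP (real (Suc n)) x) \<longlonglongrightarrow> x" by (rule Lim_transform_eventually[OF lim ev])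
  then show ?thesis using True by (simp add: indicator_def)
qed (auto simp: kP_def indicator_def)

lemma g_meas[measurable]: "g_MMV \<in> borel_measurable borel"
  unfolding g_MMV_def by measurable

lemma fM_meas[measurable]: "fM y \<in> borel_measurable borel"
  unfolding fM_def by measurable

lemma kP_meas[measurable]: "kP y \<in> borel_measurable borel"
  unfolding kP_def by measurable


theorem lemmaC1:
  fixes b c :: real and F :: "real measure"
  assumes "c \<ge> 0" and "levy_measure F"
  shows "((\<lambda>y. psi_MMV b c F y / ereal y) \<longlongrightarrow>
            (ereal b - enn2ereal (\<integral>\<^sup>+ x. ennreal x * indicator {0<..1} x \<partial>F)
             - \<infinity> * (of_bool (c > 0) + of_bool (emeasure F {..<0} > 0)))) at_top \<and>
         ereal b - enn2ereal (\<integral>\<^sup>+ x. ennreal x * indicator {0<..1} x \<partial>F)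
             - \<infinity> * (of_bool (c > 0) + of_bool (emeasure F {..<0} > 0)) < \<infinity>"
proof -
  have sF: "sets F = sets borel" and Lfin: "(\<integral>\<^sup>+ x. ennreal (min (x^2) 1) \<partial>F) < \<infinity>"
    using assms(2) by (auto simp: levy_measure_def)
  have spF: "space F = UNIV" using sets_eq_imp_space_eq[OF sF] by simp
  have BM: "borel_measurable F = borel_measurable borel" by (rule measurable_cong_sets[OF sF refl])
  define L where "L = (\<integral>\<^sup>+ x. ennreal (min (x^2) 1) \<partial>F)"
  define Lr where "Lr = enn2real L"
  define I where "I = (\<integral>\<^sup>+ x. ennreal x * indicator {0<..1} x \<partial>F)"
  define P where "P y = (\<integral>\<^sup>+ x. ennreal (fM y x) \<partial>F)" for y
  define N where "N y = (\<integral>\<^sup>+ x. ennreal (- fM y x) \<partial>F)" for y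
  define pr where "pr y = enn2real (P y)" for y
  define G where "G y = (\<integral>\<^sup>+ x. ennreal (- fM y x / y) \<partial>F)" for y
  define Gn where "Gn y = (\<integral>\<^sup>+ x. ennreal (- fM y x / y) * indicator {..<0} x \<partial>F)" for y
  define Gp where "Gp y = (\<integral>\<^sup>+ x. ennreal (kP y x) \<partial>F)" for y
  have Lt: "L < top" using Lfin by (simp add: L_def)
  have psi_eq: "psi_MMV b c F y = ereal (b*y - c*y^2/2) + (enn2ereal (P y) - enn2ereal (N y))" for y
    by (simp add: psi_MMV_def ereal_integral_def fM_def P_def N_def)
  have P_le: "P y \<le> L" for y
    unfolding P_def L_def by (intro nn_integral_mono ennreal_leI fM_upper)
  have P_eq: "P y = ennreal (pr y)" for y
    using P_le[of y] Lt by (simp add: pr_def)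
  have pr_nn: "0 \<le> pr y" for y by (simp add: pr_def)
  have pr_le: "pr y \<le> Lr" for y
    unfolding pr_def Lr_def using P_le[of y] Lt by (intro enn2real_mono) auto
  have G_eq: "G y = N y * ennreal (1/y)" if "y > 0" for y
  proof -
    have "G y = (\<integral>\<^sup>+ x. ennreal (- fM y x) * ennreal (1/y) \<partial>F)"
      unfolding G_def using that by (intro nn_integral_cong) (simp add: ennreal_mult''[symmetric] divide_inverse)
    also have "\<dots> = N y * ennreal (1/y)" unfolding N_def
      by (rule nn_integral_multc) (simp add: BM)
    finally show ?thesis .
  qed
  have key: "psi_MMV b c F y / ereal y = ereal (b - c*y/2 + pr y / y) - enn2ereal (G y)" if y: "y > 0" for y
  proof (cases "N y = top")
    case True
    then have "G y = top" using y G_eq[OF y] by (simp add: ennreal_top_mult)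
    then show ?thesis using True y pr_nn[of y] by (simp add: psi_eq P_eq enn2ereal_ennreal divide_ereal_def)
  next
    case False
    then obtain n where n: "N y = ennreal n" "0 \<le> n" by (cases "N y" rule: ennreal_cases) auto
    have "G y = ennreal (n / y)" using G_eq[OF y] n y by (simp add: ennreal_mult''[symmetric] divide_inverse)
    moreover have "ereal (b*y - c*y^2/2 + (pr y - n)) / ereal y = ereal (b - c*y/2 + pr y / y - n / y)"
      using y by (simp add: field_simps power2_eq_square)
    ultimately show ?thesis using y n pr_nn[of y] by (simp add: psi_eq P_eq)
  qed
  have G_split: "G y = Gn y + Gp y" if y: "y > 0" for y
  proof -
    have pw: "ennreal (- fM y x / y) = ennreal (- fM y x / y) * indicator {..<0} x + ennreal (kP y x)" for x
    proof -
      consider "x < 0" | "x = 0" | "x > 0" by linarith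
      then show ?thesis
      proof cases
        case 1 then show ?thesis by (simp add: kP_def)
      next
        case 2 then show ?thesis by (simp add: kP_def fM_zero)
      next
        case 3 then show ?thesis using fM_pos[OF 3 y] by simp
      qed
    qed
    have "G y = (\<integral>\<^sup>+ x. ennreal (- fM y x / y) * indicator {..<0} x + ennreal (kP y x) \<partial>F)"
      unfolding G_def by (subst pw) (rule refl)
    also have "\<dots> = Gn y + Gp y" unfolding Gn_def Gp_def
      by (rule nn_integral_add) (simp_all add: BM)
    finally show ?thesis .
  qed
  have Gp_le: "Gp y \<le> I" if "y > 0" for y
  proof -
    have "Gp y \<le> (\<integral>\<^sup>+ x. ennreal (x * indicator {0<..1} x) \<partial>F)"
      unfolding Gp_def using that by (intro nn_integral_mono ennreal_leI kP_le)
    also have "\<dots> = I" unfolding I_def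
      by (intro nn_integral_cong) (simp split: split_indicator)
    finally show ?thesis .
  qed
  have Gp_mono: "Gp y1 \<le> Gp y2" if "0 < y1" "y1 \<le> y2" for y1 y2
    unfolding Gp_def using that by (intro nn_integral_mono ennreal_leI kP_mono)
  have Gp_seq: "(\<lambda>n. Gp (real (Suc n))) \<longlonglongrightarrow> I"
  proof -
    have "(\<lambda>n. Gp (real (Suc n))) \<longlonglongrightarrow> (\<integral>\<^sup>+ x. ennreal (x * indicator {0<..1} x) \<partial>F)"
      unfolding Gp_def
    proof (rule nn_integral_LIMSEQ)
      show "incseq (\<lambda>n x. ennreal (kP (real (Suc n)) x))"
        by (rule incseq_SucI, rule le_funI, rule ennreal_leI, rule kP_mono) auto
      show "\<And>i. (\<lambda>x. ennreal (kP (real (Suc i)) x)) \<in> borel_measurable F" by (simp add: BM)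
      show "\<And>x. (\<lambda>i. ennreal (kP (real (Suc i)) x)) \<longlonglongrightarrow> ennreal (x * indicator {0<..1} x)"
        by (rule tendsto_ennrealI, rule kP_lim)
    qed
    also have "(\<integral>\<^sup>+ x. ennreal (x * indicator {0<..1} x) \<partial>F) = I" unfolding I_def
      by (intro nn_integral_cong) (simp split: split_indicator)
    finally show ?thesis .
  qed
  have Gp_lim: "(Gp \<longlongrightarrow> I) at_top"
  proof (rule order_tendstoI)
    fix a assume "a < I"
    have "\<forall>\<^sub>F n in sequentially. a < Gp (real (Suc n))" by (rule order_tendstoD(1)[OF Gp_seq \<open>a < I\<close>])
    then obtain n where n: "a < Gp (real (Suc n))" by (auto simp: eventually_sequentially)
    show "\<forall>\<^sub>F y in at_top. a < Gp y"
      unfolding eventually_at_top_linorder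
      by (rule exI[of _ "real (Suc n)"]) (auto intro: less_le_trans[OF n Gp_mono])
  next
    fix a assume "I < a"
    show "\<forall>\<^sub>F y in at_top. Gp y < a"
      using eventually_gt_at_top[of "0::real"]
      by eventually_elim (use Gp_le \<open>I < a\<close> in \<open>auto intro: le_less_trans\<close>)
  qed
  have Inn: "0 \<le> enn2ereal I" by simp
  have b1: "ereal b - enn2ereal I \<le> ereal b - 0" by (rule ereal_minus_mono) (simp_all add: Inn)
  have k0: "(0::ereal) \<le> \<infinity> * (of_bool (c > 0) + of_bool (emeasure F {..<0} > 0))" by simp
  have b2: "ereal b - enn2ereal I - \<infinity> * (of_bool (c > 0) + of_bool (emeasure F {..<0} > 0)) \<le> ereal b - enn2ereal I - 0"
    by (rule ereal_minus_mono[OF order_refl k0])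
  have fin: "ereal b - enn2ereal I - \<infinity> * (of_bool (c > 0) + of_bool (emeasure F {..<0} > 0)) < \<infinity>"
  proof -
    have "ereal b - enn2ereal I - \<infinity> * (of_bool (c > 0) + of_bool (emeasure F {..<0} > 0)) \<le> ereal b"
      by (rule order_trans[OF b2]) (use b1 in simp)
    then show ?thesis by (rule le_less_trans) simp
  qed
  have lim: "((\<lambda>y. psi_MMV b c F y / ereal y) \<longlongrightarrow>
            (ereal b - enn2ereal I - \<infinity> * (of_bool (c > 0) + of_bool (emeasure F {..<0} > 0)))) at_top"
  proof (cases "c > 0 \<or> emeasure F {..<0} > 0")
    case False
    then have c0: "c = 0" and m0: "emeasure F {..<0} = 0" using assms(1) by (auto simp: not_less)
    have AE: "AE x in F. \<not> x < 0"
      by (subst AE_iff_measurable[of "{..<0}"]) (auto simp: sF spF m0)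
    have Gn0: "Gn y = 0" for y
    proof -
      have "Gn y = (\<integral>\<^sup>+ x. 0 \<partial>F)" unfolding Gn_def
        by (rule nn_integral_cong_AE) (use AE in \<open>auto elim!: eventually_mono\<close>)
      then show ?thesis by simp
    qed
    have ev: "\<forall>\<^sub>F y in at_top. ereal (b + pr y / y) - enn2ereal (Gp y) = psi_MMV b c F y / ereal y"
      using eventually_gt_at_top[of "0::real"]
    proof eventually_elim
      case (elim y)
      show ?case using key[OF elim] G_split[OF elim] Gn0[of y] by (simp add: c0)
    qed
    have prlim: "((\<lambda>y. pr y / y) \<longlongrightarrow> 0) at_top"
    proof (rule tendsto_sandwich[of "\<lambda>_. 0" _ _ "\<lambda>y. Lr / y"])
      show "\<forall>\<^sub>F y in at_top. 0 \<le> pr y / y"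
        using eventually_gt_at_top[of "0::real"] by eventually_elim (simp add: pr_nn)
      show "\<forall>\<^sub>F y in at_top. pr y / y \<le> Lr / y"
        using eventually_gt_at_top[of "0::real"] by eventually_elim (simp add: pr_le divide_right_mono)
      show "((\<lambda>y. Lr / y) \<longlongrightarrow> 0) at_top"
        by (rule tendsto_divide_0[OF tendsto_const filterlim_at_top_imp_at_infinity[OF filterlim_ident]])
    qed simp
    have l1: "((\<lambda>y. ereal (b + pr y / y)) \<longlongrightarrow> ereal (b + 0)) at_top"
      by (intro tendsto_intros prlim)
    have l2: "((\<lambda>y. enn2ereal (Gp y)) \<longlongrightarrow> enn2ereal I) at_top"
      using Gp_lim by simp
    have "((\<lambda>y. ereal (b + pr y / y) - enn2ereal (Gp y)) \<longlongrightarrow> ereal (b + 0) - enn2ereal I) at_top"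
      by (rule tendsto_diff_ereal_general[OF l1 l2]) (use Inn in auto)
    then have "((\<lambda>y. psi_MMV b c F y / ereal y) \<longlongrightarrow> ereal b - enn2ereal I) at_top"
      using Lim_transform_eventually[OF _ ev] by simp
    then show ?thesis using False by simp
  next
    case True
    have rhs: "ereal b - enn2ereal I - \<infinity> * (of_bool (c > 0) + of_bool (emeasure F {..<0} > 0)) = -\<infinity>"
    proof -
      have "(0::ereal) < of_bool (c > 0) + of_bool (emeasure F {..<0} > 0)" using True by auto
      then have f1: "\<infinity> * (of_bool (c > 0) + of_bool (emeasure F {..<0} > 0)) = (\<infinity>::ereal)" by simp
      have "ereal b - enn2ereal I \<noteq> \<infinity>" using b1 by auto
      then have f2: "ereal b - enn2ereal I - \<infinity> = -\<infinity>" by (cases "ereal b - enn2ereal I") auto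
      show ?thesis by (simp only: f1 f2)
    qed
    define K where "K = (\<integral>\<^sup>+ x. ennreal (min (x^2) 1) * indicator {..<0} x \<partial>F)"
    have Gn_ge: "ennreal (y/2) * K \<le> Gn y" if y: "y > 0" for y
    proof -
      have "ennreal (y/2) * K = (\<integral>\<^sup>+ x. ennreal (y/2) * (ennreal (min (x^2) 1) * indicator {..<0} x) \<partial>F)"
        unfolding K_def by (rule nn_integral_cmult[symmetric]) (simp add: BM)
      also have "\<dots> \<le> Gn y" unfolding Gn_def
      proof (rule nn_integral_mono)
        fix x
        show "ennreal (y/2) * (ennreal (min (x^2) 1) * indicator {..<0} x) \<le> ennreal (- fM y x / y) * indicator {..<0} x"
        proof (cases "x < 0")
          case True
          have "ennreal (y/2) * ennreal (min (x^2) 1) = ennreal (y/2 * min (x^2) 1)"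
            using y by (subst ennreal_mult') auto
          also have "\<dots> \<le> ennreal (- fM y x / y)" by (rule ennreal_leI, rule fM_neg[OF True y])
          finally show ?thesis using True by simp
        qed simp
      qed
      finally show ?thesis .
    qed
    have Kpos: "K > 0" if m: "emeasure F {..<0} > 0"
    proof (rule ccontr)
      assume "\<not> K > 0"
      then have "K = 0" by (simp add: zero_less_iff_neq_zero)
      then have "AE x in F. ennreal (min (x^2) 1) * indicator {..<0} x = 0"
        unfolding K_def by (subst (asm) nn_integral_0_iff_AE) (simp_all add: BM)
      then have "AE x in F. \<not> x < 0"
        by (rule eventually_mono) (auto split: split_indicator split: if_splits simp: min_def)
      then have "emeasure F {..<0} = 0"
        by (subst (asm) AE_iff_measurable[of "{..<0}"]) (auto simp: sF spF)
      then show False using m by simp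
    qed
    obtain \<kappa> where k0: "\<kappa> \<ge> 0" and kc: "c + \<kappa> > 0" and kG: "\<And>y. y > 0 \<Longrightarrow> ennreal (y/2*\<kappa>) \<le> Gn y"
    proof (cases "emeasure F {..<0} > 0")
      case True
      define \<kappa> where "\<kappa> = (if K = top then 1 else enn2real K)"
      have kp: "\<kappa> > 0" using Kpos[OF True] by (auto simp: \<kappa>_def enn2real_positive_iff top.not_eq_extremum)
      have kK: "ennreal \<kappa> \<le> K" by (auto simp: \<kappa>_def top.not_eq_extremum)
      show ?thesis
      proof (rule that[of \<kappa>])
        show "0 \<le> \<kappa>" "0 < c + \<kappa>" using kp assms(1) by auto
        fix y :: real assume y: "y > 0"
        have "ennreal (y/2*\<kappa>) = ennreal (y/2) * ennreal \<kappa>" using y by (subst ennreal_mult') auto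
        also have "\<dots> \<le> ennreal (y/2) * K" by (rule mult_left_mono[OF kK]) simp
        also have "\<dots> \<le> Gn y" by (rule Gn_ge[OF y])
        finally show "ennreal (y/2*\<kappa>) \<le> Gn y" .
      qed
    next
      case False
      then have "c > 0" using \<open>c > 0 \<or> emeasure F {..<0} > 0\<close> by simp
      then show ?thesis by (intro that[of 0]) auto
    qed
    have "((\<lambda>y. psi_MMV b c F y / ereal y) \<longlongrightarrow> -\<infinity>) at_top"
      unfolding tendsto_MInfty
    proof
      fix r :: real
      define M where "M = max 1 (2 * \<bar>b + Lr - r\<bar> / (c + \<kappa>) + 1)"
      show "\<forall>\<^sub>F y in at_top. psi_MMV b c F y / ereal y < ereal r"
        using eventually_ge_at_top[of M]
      proof eventually_elim
        case (elim y)
        then have y1: "y \<ge> 1" and yM: "y \<ge> 2 * \<bar>b + Lr - r\<bar> / (c + \<kappa>) + 1" by (auto simp: M_def)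
        have y: "y > 0" using y1 by simp
        have "2 * \<bar>b + Lr - r\<bar> / (c + \<kappa>) \<le> y - 1" using yM by linarith
        then have "2 * \<bar>b + Lr - r\<bar> \<le> (y - 1) * (c + \<kappa>)" using kc by (simp add: pos_divide_le_eq)
        moreover have "(y - 1) * (c + \<kappa>) = y * (c + \<kappa>) - (c + \<kappa>)" by (simp add: algebra_simps)
        ultimately have "2 * (b + Lr - r) < y * (c + \<kappa>)" using kc abs_ge_self[of "b + Lr - r"] by (smt (verit))
        then have ineq: "b + Lr - r < y * (c + \<kappa>) / 2" by simp
        have prl: "pr y / y \<le> Lr"
        proof -
          have "pr y / y \<le> pr y" using divide_left_mono[of 1 y "pr y"] y1 pr_nn[of y] by simp
          then show ?thesis using pr_le[of y] by linarith
        qed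
        have Gge: "ereal (y/2*\<kappa>) \<le> enn2ereal (G y)"
        proof -
          have "ennreal (y/2*\<kappa>) \<le> G y" using kG[OF y] G_split[OF y] by (simp add: add_increasing2)
          then show ?thesis using y k0 by (simp add: less_eq_ennreal.rep_eq)
        qed
        have "psi_MMV b c F y / ereal y \<le> ereal (b - c*y/2 + Lr) - ereal (y/2*\<kappa>)"
          unfolding key[OF y] by (rule ereal_minus_mono[OF _ Gge]) (use prl in simp)
        also have "\<dots> = ereal (b + Lr - y * (c + \<kappa>) / 2)" by (simp add: algebra_simps)
        also have "\<dots> < ereal r" using ineq by simp
        finally show ?case .
      qed
    qed
    then show ?thesis using rhs by simp
  qed
  show ?thesis using fin lim by (simp add: I_def)
qed

end
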